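(* Assume $x=0$ and let $c_6=313600/s$. Let $u_{t_5}$ be a configuration of protocol $P_o$ at time $t_5$ such that $a_{j,t_5}\le c_6/n$ and $a_{j+1,t_5}>s/40$ for some $j\in\{1,2,3\}$ (indices modulo 3). Then, with probability at least a positive constant independent of $n$, for some $t_6=t_5+O(n)$ a configuration $u_{t_6}$ is reached with $a_{\min,t_6}=0$.
   Context: Population protocol model: $n$ agents; in each step a scheduler picks an ordered pair (initiator, receiver) of distinct agents uniformly at random; rules written $A:B\mapsto C$ mean an initiator in state $A$ turns a receiver in state $B$ into $C$ (initiator unchanged). Time is counted in steps. Protocol $P_o$ has a source state $X$ (never changed) and states $A_i^+,A_i^{++}$, $i\in\{1,2,3\}$, indices modulo 3, $A_i^?$ denoting either flavor. Rules for each $i$: (1) $A_i^?:A_i^?\mapsto A_i^{++}$; (2) $A_i^?:A_{i+1}^?\mapsto A_{i+1}^+$; (3) $A_i^+:A_{i-1}^?\mapsto A_i^+$ w.p. $p$, else $A_{i-1}^+$; (4) $A_i^{++}:A_{i-1}^?\mapsto A_i^+$ w.p. $2p$, else $A_{i-1}^+$; (5) $X:A_j^?\mapsto A_\ell^+$, $\ell$ uniform in $\{1,2,3\}$. Here $p>0$ is a sufficiently small constant. Notation: $x=\#X/n$, $a_i=(\#A_i^++\#A_i^{++})/n$, $s=a_1+a_2+a_3$, $a_{\min}=\min_i a_i$; subscript $t$ denotes the value at step $t$. *)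

theory Defs
  imports "HOL-Probability.Probability"
begin

datatype idx = I1 | I2 | I3

fun nxt :: "idx \<Rightarrow> idx" where
  "nxt I1 = I2" | "nxt I2 = I3" | "nxt I3 = I1"

fun prv :: "idx \<Rightarrow> idx" where
  "prv I1 = I3" | "prv I2 = I1" | "prv I3 = I2"

text \<open>Agent states: source X, A_i^+ (SP i), A_i^++ (SPP i).\<close>
datatype st = SX | SP idx | SPP idx

fun species :: "st \<Rightarrow> idx option" where
  "species SX = None" | "species (SP i) = Some i" | "species (SPP i) = Some i"

text \<open>Receiver of species j, initiator of species i (dbl: initiator is A_i^++).\<close>
definition react :: "real \<Rightarrow> idx \<Rightarrow> bool \<Rightarrow> idx \<Rightarrow> st pmf" where
  "react p i dbl j =
     (if j = i then return_pmf (SPP i)                         \<comment> \<open>rule (1)\<close>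
      else if j = nxt i then return_pmf (SP j)                 \<comment> \<open>rule (2)\<close>
      else map_pmf (\<lambda>b. if b then SP i else SP j)               \<comment> \<open>rules (3),(4): j = i-1\<close>
             (bernoulli_pmf (if dbl then 2 * p else p)))"

definition interact :: "real \<Rightarrow> st \<Rightarrow> st \<Rightarrow> st pmf" where
  "interact p u v =
     (case species v of
        None \<Rightarrow> return_pmf v
      | Some j \<Rightarrow>
          (case u of
             SX \<Rightarrow> map_pmf SP (pmf_of_set {I1, I2, I3})        \<comment> \<open>rule (5)\<close>
           | SP i \<Rightarrow> react p i False j
           | SPP i \<Rightarrow> react p i True j))"

text \<open>A configuration of n agents: agent k (k < n) is in state c k.\<close>
type_synonym cfg = "nat \<Rightarrow> st"

definition step :: "real \<Rightarrow> nat \<Rightarrow> cfg \<Rightarrow> cfg pmf" where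
  "step p n c =
     bind_pmf (pmf_of_set {(a, b). a < n \<and> b < n \<and> a \<noteq> b})
       (\<lambda>(a, b). map_pmf (\<lambda>w. c(b := w)) (interact p (c a) (c b)))"

text \<open>hit K P k x = probability that the Markov chain with kernel K started at x
  visits a state satisfying P at some time t \<le> k.\<close>
fun hit :: "('a \<Rightarrow> 'a pmf) \<Rightarrow> ('a \<Rightarrow> bool) \<Rightarrow> nat \<Rightarrow> 'a \<Rightarrow> real" where
  "hit K P 0 x = (if P x then 1 else 0)"
| "hit K P (Suc k) x = (if P x then 1 else measure_pmf.expectation (K x) (hit K P k))"

definition xfrac :: "nat \<Rightarrow> cfg \<Rightarrow> real" where
  "xfrac n c = real (card {k. k < n \<and> c k = SX}) / real n"

definition afrac :: "nat \<Rightarrow> cfg \<Rightarrow> idx \<Rightarrow> real" where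
  "afrac n c i = real (card {k. k < n \<and> species (c k) = Some i}) / real n"

definition sfrac :: "nat \<Rightarrow> cfg \<Rightarrow> real" where
  "sfrac n c = afrac n c I1 + afrac n c I2 + afrac n c I3"

definition amin :: "nat \<Rightarrow> cfg \<Rightarrow> real" where
  "amin n c = min (afrac n c I1) (min (afrac n c I2) (afrac n c I3))"

definition c6 :: "nat \<Rightarrow> cfg \<Rightarrow> real" where
  "c6 n c = 313600 / sfrac n c"

end

theory Submission
  imports Defs
begin

lemma hit_bounds: "0 \<le> hit K P k x \<and> hit K P k x \<le> 1"
proof (induction k arbitrary: x)
  case 0 then show ?case by simp
next
  case (Suc k)
  have int: "integrable (measure_pmf (K x)) (hit K P k)"
    by (rule measure_pmf.integrable_const_bound[where B=1]) (use Suc in auto)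
  have "0 \<le> measure_pmf.expectation (K x) (hit K P k)"
    by (rule measure_pmf.integral_ge_const[OF int]) (use Suc in auto)
  moreover have "measure_pmf.expectation (K x) (hit K P k) \<le> 1"
    by (rule measure_pmf.integral_le_const[OF int]) (use Suc in auto)
  ultimately show ?case by simp
qed

lemma hit_integrable: "integrable (measure_pmf M) (hit K P k)"
proof (rule measure_pmf.integrable_const_bound[where B=1])
  have "\<And>x. \<bar>hit K P k x\<bar> \<le> 1" using hit_bounds[of K P k] by (simp add: abs_le_iff)
  then show "AE x in measure_pmf M. norm (hit K P k x) \<le> 1" by simp
qed simp

lemma hit_mono_Suc: "hit K P k x \<le> hit K P (Suc k) x"
proof (induction k arbitrary: x)
  case 0
  show ?case using hit_bounds[of K P 0] 
    by (auto intro!: measure_pmf.integral_ge_const hit_integrable)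
next
  case (Suc k)
  show ?case
    using Suc by (auto intro!: integral_mono hit_integrable)
qed

lemma hit_mono: "k \<le> k' \<Longrightarrow> hit K P k x \<le> hit K P k' x"
proof (induction k' rule: dec_induct)
  case base then show ?case by simp
next
  case (step m) then show ?case using hit_mono_Suc[of K P m x] by linarith
qed

definition hh :: "real \<Rightarrow> real \<Rightarrow> nat \<Rightarrow> nat \<Rightarrow> real" where
  "hh r \<beta> k m = r ^ k * \<beta> ^ m * real (k choose m)"

lemma hh_nonneg: "0 \<le> r \<Longrightarrow> 0 \<le> \<beta> \<Longrightarrow> 0 \<le> hh r \<beta> k m"
  by (simp add: hh_def)

lemma hh_le1:
  assumes r: "0 \<le> r" and b: "0 \<le> \<beta>" and rb: "r + \<beta> \<le> 1"
  shows "hh r \<beta> k m \<le> 1"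
proof (cases "m \<le> k")
  case False then show ?thesis by (simp add: hh_def binomial_eq_0)
next
  case True
  have "r ^ k \<le> r ^ (k - m)" using r rb b by (intro power_decreasing) auto
  then have "(real (k choose m) * \<beta> ^ m) * r ^ k \<le> (real (k choose m) * \<beta> ^ m) * r ^ (k - m)"
    using b by (intro mult_left_mono) auto
  then have "hh r \<beta> k m \<le> real (k choose m) * \<beta> ^ m * r ^ (k - m)"
    unfolding hh_def by (simp add: algebra_simps)
  also have "\<dots> \<le> (\<Sum>i\<le>k. real (k choose i) * \<beta> ^ i * r ^ (k - i))"
    using True r b by (intro member_le_sum) auto
  also have "\<dots> = (\<beta> + r) ^ k" by (rule binomial_ring[symmetric])
  also have "\<dots> \<le> 1" using r b rb by (intro power_le_one) auto
  finally show ?thesis .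
qed

lemma hh_mono_Suc:
  assumes r: "0 \<le> r" and b: "0 \<le> \<beta>" and bk: "\<beta> * k \<le> 1"
  shows "hh r \<beta> k (Suc m) \<le> hh r \<beta> k m"
proof (cases k)
  case 0 then show ?thesis using b by (simp add: hh_def)
next
  case (Suc k')
  have "Suc m * (k choose Suc m) = k * (k' choose m)" by (simp only: Suc Suc_times_binomial)
  moreover have "k' choose m \<le> k choose m" using Suc by (intro binomial_right_mono) simp
  ultimately have "Suc m * (k choose Suc m) \<le> k * (k choose m)" by simp
  then have "real (k choose Suc m) \<le> real k * real (k choose m)"
    by (metis (mono_tags, lifting) le_trans mult_le_mono1 mult_Suc of_nat_le_iff of_nat_mult le_add1)
  then have "\<beta> * real (k choose Suc m) \<le> \<beta> * (real k * real (k choose m))"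
    using b by (rule mult_left_mono)
  also have "\<dots> = (\<beta> * k) * real (k choose m)" by simp
  also have "\<dots> \<le> 1 * real (k choose m)" using bk by (intro mult_right_mono) auto
  finally have *: "\<beta> * real (k choose Suc m) \<le> real (k choose m)" by simp
  have "hh r \<beta> k (Suc m) = (r ^ k * \<beta> ^ m) * (\<beta> * real (k choose Suc m))"
    by (simp add: hh_def algebra_simps)
  also have "\<dots> \<le> (r ^ k * \<beta> ^ m) * real (k choose m)"
    using * r b by (intro mult_left_mono) auto
  finally show ?thesis by (simp add: hh_def)
qed

lemma hh_mono:
  assumes r: "0 \<le> r" and b: "0 \<le> \<beta>" and bk: "\<beta> * k \<le> 1" and mm: "m \<le> m'"
  shows "hh r \<beta> k m' \<le> hh r \<beta> k m"
  using mm
proof (induction m' rule: dec_induct)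
  case base then show ?case by simp
next
  case (step i) then show ?case using hh_mono_Suc[OF r b bk, of i] by linarith
qed

lemma hh_rec:
  assumes r: "0 \<le> r" "r \<le> 1" and b: "0 \<le> \<beta>"
  shows "hh r \<beta> (Suc k) (Suc m) \<le> r * hh r \<beta> k (Suc m) + \<beta> * hh r \<beta> k m"
proof -
  have "r ^ Suc k \<le> r ^ k" using r by (simp add: mult_left_le_one_le)
  then have "r ^ Suc k * \<beta> ^ Suc m * real (k choose m) \<le> r ^ k * \<beta> ^ Suc m * real (k choose m)"
    using b by (intro mult_right_mono) auto
  then show ?thesis by (simp add: hh_def algebra_simps)
qed

definition Sp :: "nat \<Rightarrow> cfg \<Rightarrow> idx \<Rightarrow> nat set" where
  "Sp n c i = {k. k < n \<and> species (c k) = Some i}"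

definition noX :: "nat \<Rightarrow> cfg \<Rightarrow> bool" where
  "noX n c = (\<forall>k<n. c k \<noteq> SX)"

lemma Sp_finite[simp]: "finite (Sp n c i)"
  by (rule finite_subset[of _ "{..<n}"]) (auto simp: Sp_def)

lemma species_None_iff: "species v = None \<longleftrightarrow> v = SX"
  by (cases v) auto

lemma interact_finite: "finite (set_pmf (interact p u v))"
  by (cases u; cases v) (auto simp: interact_def react_def)

lemma interact_SX: "w \<in> set_pmf (interact p u SX) \<Longrightarrow> w = SX"
  by (auto simp: interact_def)

lemma interact_nonX: "v \<noteq> SX \<Longrightarrow> w \<in> set_pmf (interact p u v) \<Longrightarrow> w \<noteq> SX"
  by (cases u; cases v) (auto simp: interact_def react_def split: if_splits)

lemma interact_species: "u \<noteq> SX \<Longrightarrow> w \<in> set_pmf (interact p u v) \<Longrightarrow>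
    species w = species u \<or> species w = species v"
  by (cases u; cases v) (auto simp: interact_def react_def split: if_splits)

lemma nxt_neq[simp]: "nxt j \<noteq> j" "nxt (nxt j) \<noteq> j" "j \<noteq> nxt j" "j \<noteq> nxt (nxt j)"
  by (cases j; simp)+

lemma interact_down:
  assumes "species u = Some (nxt j)" "species v = Some j" "0 \<le> p"
  shows "\<exists>q. p \<le> q \<and> q \<le> 2 * p \<and>
     interact p u v = map_pmf (\<lambda>bb. if bb then SP (nxt j) else SP j) (bernoulli_pmf q)"
proof (cases u)
  case SX then show ?thesis using assms by simp
next
  case (SP i) then show ?thesis using assms
    by (intro exI[of _ p]) (cases v; cases j; auto simp: interact_def react_def intro!: map_pmf_cong)
next
  case (SPP i) then show ?thesis using assms
    by (intro exI[of _ "2*p"]) (cases v; cases j; auto simp: interact_def react_def intro!: map_pmf_cong)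
qed

lemma Sp_upd: "b < n \<Longrightarrow> Sp n (c(b := w)) i = (Sp n c i - {b}) \<union> (if species w = Some i then {b} else {})"
  by (auto simp: Sp_def)

lemma upd_props:
  assumes b: "b < n" and nx: "noX n c" and w: "w \<noteq> SX"
    and wj: "species w = Some j \<longrightarrow> species (c b) = Some j"
    and cB: "B + Suc k \<le> card (Sp n c (nxt j))"
  shows "noX n (c(b:=w)) \<and> card (Sp n (c(b:=w)) j) \<le> card (Sp n c j) \<and>
         B + k \<le> card (Sp n (c(b:=w)) (nxt j))"
proof (intro conjI)
  show "noX n (c(b:=w))" using nx w by (auto simp: noX_def)
  have "Sp n (c(b:=w)) j \<subseteq> Sp n c j" using wj b by (auto simp: Sp_def)
  then show "card (Sp n (c(b:=w)) j) \<le> card (Sp n c j)" by (intro card_mono) auto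
  have "Sp n c (nxt j) - {b} \<subseteq> Sp n (c(b:=w)) (nxt j)" using b by (auto simp: Sp_def)
  then have "card (Sp n c (nxt j) - {b}) \<le> card (Sp n (c(b:=w)) (nxt j))" by (intro card_mono) auto
  moreover have "card (Sp n c (nxt j)) - 1 \<le> card (Sp n c (nxt j) - {b})"
    by (simp add: card_Diff_singleton_if)
  ultimately show "B + k \<le> card (Sp n (c(b:=w)) (nxt j))" using cB by linarith
qed

lemma hit_integrable': "integrable (measure_pmf M) (\<lambda>w. hit K P k (f w))"
proof (rule measure_pmf.integrable_const_bound[where B=1])
  have "\<And>x. \<bar>hit K P k x\<bar> \<le> 1" using hit_bounds[of K P k] by (simp add: abs_le_iff)
  then show "AE x in measure_pmf M. norm (hit K P k (f x)) \<le> 1" by simp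
qed simp

lemma alg_helper:
  fixes N t h K p d B :: real
  assumes "N \<noteq> 0" "t \<noteq> 0"
  shows "(h * (N * t - K * N) + p * d * B) / (N * t) = (1 - K / t) * h + B * p / (N * t) * d"
  using assms by (simp add: field_simps)

lemma step_bound:
  fixes p :: real and n m k K B :: nat and j :: idx and c :: cfg and h :: "nat \<Rightarrow> real"
  assumes n2: "2 \<le> n" and p0: "0 \<le> p" and p1: "2*p \<le> 1"
  and nx: "noX n c" and cm: "card (Sp n c j) = Suc m" and mK: "Suc m \<le> K"
  and cB: "B + Suc k \<le> card (Sp n c (nxt j))"
  and IH: "\<And>c' m'. noX n c' \<Longrightarrow> card (Sp n c' j) \<le> m' \<Longrightarrow> m' \<le> K \<Longrightarrow>
             B + k \<le> card (Sp n c' (nxt j)) \<Longrightarrow> h m' \<le> hit (step p n) P k c'"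
  and hmono: "h (Suc m) \<le> h m" and h0: "0 \<le> h (Suc m)"
  shows "(1 - real K / (real n - 1)) * h (Suc m) + real B * p / (real n * (real n - 1)) * (h m - h (Suc m))
          \<le> measure_pmf.expectation (step p n c) (hit (step p n) P k)"
proof -
  define Pairs where "Pairs = {(a, b). a < n \<and> b < n \<and> a \<noteq> b}"
  define G where "G = (\<lambda>x. case x of (a, b) \<Rightarrow>
      measure_pmf.expectation (interact p (c a) (c b)) (\<lambda>w. hit (step p n) P k (c(b := w))))"
  define D where "D = {x\<in>Pairs. species (c (fst x)) = Some (nxt j) \<and> species (c (snd x)) = Some j}"
  define Q where "Q = (\<lambda>x::nat\<times>nat. species (c (fst x)) = Some j)"
  define d where "d = h m - h (Suc m)"
  define L where "L = (\<lambda>x::nat\<times>nat. (if Q x then 0 else h (Suc m)) + (if x \<in> D then p * d else 0))"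
  have d0: "0 \<le> d" using hmono by (simp add: d_def)
  have finP: "finite Pairs" by (rule finite_subset[of _ "{..<n}\<times>{..<n}"]) (auto simp: Pairs_def)
  have "(0, 1) \<in> Pairs" using n2 by (simp add: Pairs_def)
  then have neP: "Pairs \<noteq> {}" by auto
  have Peq: "Pairs = {..<n}\<times>{..<n} - (\<lambda>a. (a, a)) ` {..<n}" by (auto simp: Pairs_def)
  have "card Pairs = card ({..<n}\<times>{..<n}) - card ((\<lambda>a. (a, a)) ` {..<n})"
    unfolding Peq by (rule card_Diff_subset) auto
  also have "card ((\<lambda>a. (a, a)) ` {..<n}) = n" by (subst card_image) (auto simp: inj_on_def)
  finally have "card Pairs = n * n - n" by (simp add: card_cartesian_product)
  then have cardP: "real (card Pairs) = real n * (real n - 1)"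
    using n2 by (simp add: of_nat_diff algebra_simps)
  have Npos: "0 < real n * (real n - 1)" using n2 by simp
  have E: "measure_pmf.expectation (step p n c) (hit (step p n) P k) = (\<Sum>x\<in>Pairs. G x) / real (card Pairs)"
  proof -
    have "measure_pmf.expectation (step p n c) (hit (step p n) P k) =
      (\<Sum>x\<in>Pairs. measure_pmf.expectation ((\<lambda>(a, b). map_pmf (\<lambda>w. c(b := w)) (interact p (c a) (c b))) x)
          (hit (step p n) P k) /\<^sub>R real (card Pairs))"
      unfolding step_def Pairs_def[symmetric]
      by (rule pmf_expectation_bind_pmf_of_set[OF neP finP]) (auto simp: interact_finite split: prod.splits)
    also have "\<dots> = (\<Sum>x\<in>Pairs. G x / real (card Pairs))"
      by (intro sum.cong refl) (auto simp: G_def divide_inverse_commute split: prod.splits)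
    finally show ?thesis by (simp add: sum_divide_distrib)
  qed
  have GL: "L x \<le> G x" if x: "x \<in> Pairs" for x
  proof -
    obtain a b where ab: "x = (a, b)" "a < n" "b < n" "a \<noteq> b" using x by (auto simp: Pairs_def)
    have ca: "c a \<noteq> SX" and cb: "c b \<noteq> SX" using nx ab by (auto simp: noX_def)
    have Gx: "G x = measure_pmf.expectation (interact p (c a) (c b)) (\<lambda>w. hit (step p n) P k (c(b := w)))"
      by (simp add: G_def ab)
    consider (J) "Q x" | (Dn) "x \<in> D" | (O) "\<not> Q x" "x \<notin> D" by blast
    then show ?thesis
    proof cases
      case J
      then have "x \<notin> D" by (auto simp: D_def Q_def)
      then have "L x = 0" using J by (simp add: L_def)
      moreover have "0 \<le> G x" unfolding Gx
        by (intro measure_pmf.integral_ge_const hit_integrable' AE_I2) (simp add: hit_bounds)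
      ultimately show ?thesis by simp
    next
      case O
      then have "L x = h (Suc m)" by (simp add: L_def)
      moreover have "h (Suc m) \<le> G x" unfolding Gx
      proof (intro measure_pmf.integral_ge_const hit_integrable' AE_pmfI)
        fix w assume w: "w \<in> set_pmf (interact p (c a) (c b))"
        have wX: "w \<noteq> SX" using interact_nonX[OF cb w] .
        have "species w = species (c a) \<or> species w = species (c b)" using interact_species[OF ca w] .
        then have "species w = Some j \<longrightarrow> species (c b) = Some j" using O ab by (auto simp: Q_def)
        from upd_props[OF ab(3) nx wX this cB] mK cm
        show "h (Suc m) \<le> hit (step p n) P k (c(b := w))" by (intro IH) auto
      qed
      ultimately show ?thesis by simp
    next
      case Dn
      then have sa: "species (c a) = Some (nxt j)" and sb: "species (c b) = Some j"
        by (auto simp: D_def ab)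
      then have nQ: "\<not> Q x" by (simp add: Q_def ab)
      then have Lx: "L x = h (Suc m) + p * d" using Dn by (simp add: L_def)
      obtain q where q: "p \<le> q" "q \<le> 2 * p"
        and iq: "interact p (c a) (c b) = map_pmf (\<lambda>bb. if bb then SP (nxt j) else SP j) (bernoulli_pmf q)"
        using interact_down[OF sa sb p0] by blast
      have q01: "0 \<le> q" "q \<le> 1" using q p0 p1 by auto
      have Gx2: "G x = hit (step p n) P k (c(b := SP (nxt j))) * q + hit (step p n) P k (c(b := SP j)) * (1 - q)"
        unfolding Gx iq using q01 by simp
      have H1: "h m \<le> hit (step p n) P k (c(b := SP (nxt j)))"
      proof (rule IH)
        show "noX n (c(b := SP (nxt j)))" using nx by (auto simp: noX_def)
        have "Sp n (c(b := SP (nxt j))) j = Sp n c j - {b}" using ab by (auto simp: Sp_def)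
        moreover have "b \<in> Sp n c j" using ab sb by (simp add: Sp_def)
        ultimately show "card (Sp n (c(b := SP (nxt j))) j) \<le> m" using cm by simp
        show "m \<le> K" using mK by simp
        have "Sp n c (nxt j) \<subseteq> Sp n (c(b := SP (nxt j))) (nxt j)" by (auto simp: Sp_def)
        then have "card (Sp n c (nxt j)) \<le> card (Sp n (c(b := SP (nxt j))) (nxt j))" by (intro card_mono) auto
        then show "B + k \<le> card (Sp n (c(b := SP (nxt j))) (nxt j))" using cB by simp
      qed
      have H0: "h (Suc m) \<le> hit (step p n) P k (c(b := SP j))"
        using upd_props[OF ab(3) nx _ _ cB, of "SP j"] sb mK cm by (intro IH) auto
      have "q * h m \<le> q * hit (step p n) P k (c(b := SP (nxt j)))" using H1 q01 by (intro mult_left_mono) auto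
      moreover have "(1 - q) * h (Suc m) \<le> (1 - q) * hit (step p n) P k (c(b := SP j))"
        using H0 q01 by (intro mult_left_mono) auto
      moreover have "p * d \<le> q * d" using q d0 by (intro mult_right_mono) auto
      ultimately show ?thesis unfolding Lx Gx2 d_def by (simp add: algebra_simps)
    qed
  qed
  have sumL: "(\<Sum>x\<in>Pairs. L x) = h (Suc m) * real (card (Pairs - {x. Q x})) + p * d * real (card D)"
  proof -
    have "(\<Sum>x\<in>Pairs. L x) = (\<Sum>x\<in>Pairs. if Q x then 0 else h (Suc m)) + (\<Sum>x\<in>Pairs. if x \<in> D then p * d else 0)"
      by (simp add: L_def sum.distrib)
    also have "(\<Sum>x\<in>Pairs. if Q x then 0 else h (Suc m)) = h (Suc m) * real (card (Pairs - {x. Q x}))"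
      using finP by (simp add: sum.If_cases Diff_eq)
    also have "(\<Sum>x\<in>Pairs. if x \<in> D then p * d else 0) = p * d * real (card D)"
    proof -
      have "Pairs \<inter> {x. x \<in> D} = D" by (auto simp: D_def)
      then show ?thesis using finP by (simp add: sum.If_cases)
    qed
    finally show ?thesis .
  qed
  have c1: "real (card Pairs) - real K * real n \<le> real (card (Pairs - {x. Q x}))"
  proof -
    have cP: "card Pairs = card (Pairs \<inter> {x. Q x}) + card (Pairs - {x. Q x})" using finP by (rule card_Int_Diff)
    have "Pairs \<inter> {x. Q x} \<subseteq> Sp n c j \<times> {..<n}" by (auto simp: Pairs_def Q_def Sp_def)
    then have "card (Pairs \<inter> {x. Q x}) \<le> card (Sp n c j \<times> {..<n})" by (intro card_mono) auto
    moreover have "Suc m * n \<le> K * n" using mK by (rule mult_le_mono1)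
    ultimately have "card (Pairs \<inter> {x. Q x}) \<le> K * n" using cm by (simp add: card_cartesian_product)
    then have "card Pairs \<le> K * n + card (Pairs - {x. Q x})" using cP by linarith
    then have "real (card Pairs) \<le> real K * real n + real (card (Pairs - {x. Q x}))"
      by (metis of_nat_add of_nat_le_iff of_nat_mult)
    then show ?thesis by linarith
  qed
  have c2: "real B \<le> real (card D)"
  proof -
    obtain b0 where b0: "b0 \<in> Sp n c j" using cm by (metis card.empty ex_in_conv nat.simps(3))
    have "(\<lambda>a. (a, b0)) ` Sp n c (nxt j) \<subseteq> D" using b0 by (auto simp: D_def Pairs_def Sp_def)
    then have "card ((\<lambda>a. (a, b0)) ` Sp n c (nxt j)) \<le> card D"
      by (intro card_mono) (auto simp: D_def intro: finite_subset[OF _ finP])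
    moreover have "card ((\<lambda>a. (a, b0)) ` Sp n c (nxt j)) = card (Sp n c (nxt j))"
      by (subst card_image) (auto simp: inj_on_def)
    ultimately show ?thesis using cB by simp
  qed
  have "(\<Sum>x\<in>Pairs. L x) \<le> (\<Sum>x\<in>Pairs. G x)" using GL by (intro sum_mono) auto
  then have main: "(h (Suc m) * real (card (Pairs - {x. Q x})) + p * d * real (card D)) / (real n * (real n - 1))
        \<le> measure_pmf.expectation (step p n c) (hit (step p n) P k)"
    unfolding E sumL cardP using Npos by (simp add: divide_right_mono)
  have "h (Suc m) * (real n * (real n - 1) - real K * real n) \<le> h (Suc m) * real (card (Pairs - {x. Q x}))"
    using c1 h0 cardP by (intro mult_left_mono) auto
  moreover have "p * d * real B \<le> p * d * real (card D)" using c2 p0 d0 by (intro mult_left_mono) auto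
  ultimately have "(h (Suc m) * (real n * (real n - 1) - real K * real n) + p * d * real B) / (real n * (real n - 1))
     \<le> (h (Suc m) * real (card (Pairs - {x. Q x})) + p * d * real (card D)) / (real n * (real n - 1))"
    using Npos by (intro divide_right_mono) auto
  moreover have "(h (Suc m) * (real n * (real n - 1) - real K * real n) + p * d * real B) / (real n * (real n - 1))
     = (1 - real K / (real n - 1)) * h (Suc m) + real B * p / (real n * (real n - 1)) * d"
  proof -
    have n1: "real n - 1 \<noteq> 0" "real n \<noteq> 0" using n2 by auto
    show ?thesis using alg_helper[OF n1(2) n1(1)] by simp
  qed
  ultimately show ?thesis using main unfolding d_def by linarith
qed


lemma amin_zero: "card (Sp n c j) = 0 \<Longrightarrow> amin n c = 0"
proof -
  assume h: "card (Sp n c j) = 0"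
  have a: "afrac n c j = 0" using h by (simp add: afrac_def Sp_def)
  have nn: "\<And>i. 0 \<le> afrac n c i" by (simp add: afrac_def)
  show ?thesis using a nn[of I1] nn[of I2] nn[of I3] by (cases j) (auto simp: amin_def)
qed

lemma main_ind:
  fixes p \<beta> r :: real and n K B kmax :: nat and j :: idx
  assumes n2: "2 \<le> n" and p0: "0 \<le> p" and p1: "2*p \<le> 1"
  and beta: "\<beta> = real B * p / (real n * (real n - 1))"
  and rdef: "r = 1 - real K / (real n - 1) - \<beta>"
  and r0: "0 \<le> r" and bk: "\<beta> * real kmax \<le> 1"
  shows "k \<le> kmax \<Longrightarrow> noX n c \<Longrightarrow> card (Sp n c j) \<le> m \<Longrightarrow> m \<le> K \<Longrightarrow>
     B + k \<le> card (Sp n c (nxt j)) \<Longrightarrow> hh r \<beta> k m \<le> hit (step p n) (\<lambda>d. amin n d = 0) k c"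
proof (induction k arbitrary: c m)
  have b0: "0 \<le> \<beta>" unfolding beta using n2 p0 by (intro divide_nonneg_pos mult_nonneg_nonneg) auto
  have Kn: "0 \<le> real K / (real n - 1)" using n2 by simp
  have r1: "r \<le> 1" "r + \<beta> \<le> 1" using b0 Kn rdef by auto
  case 0
  show ?case
  proof (cases "m = 0")
    case True
    then have "amin n c = 0" using 0 by (intro amin_zero) auto
    then show ?thesis using True by (simp add: hh_def)
  next
    case False
    then show ?thesis using hit_bounds[of "step p n" "\<lambda>d. amin n d = 0" 0 c] by (simp add: hh_def binomial_eq_0)
  qed
next
  have b0: "0 \<le> \<beta>" unfolding beta using n2 p0 by (intro divide_nonneg_pos mult_nonneg_nonneg) auto
  have Kn: "0 \<le> real K / (real n - 1)" using n2 by simp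
  have r1: "r \<le> 1" "r + \<beta> \<le> 1" using b0 Kn rdef by auto
  case (Suc k)
  define m0 where "m0 = card (Sp n c j)"
  have "real (Suc k) \<le> real kmax" using Suc.prems(1) by simp
  then have "\<beta> * real (Suc k) \<le> \<beta> * real kmax" using b0 by (rule mult_left_mono)
  then have bSk: "\<beta> * real (Suc k) \<le> 1" using bk by linarith
  have "real k \<le> real kmax" using Suc.prems(1) by simp
  then have "\<beta> * real k \<le> \<beta> * real kmax" using b0 by (rule mult_left_mono)
  then have bk': "\<beta> * real k \<le> 1" using bk by linarith
  have "hh r \<beta> (Suc k) m \<le> hh r \<beta> (Suc k) m0"
    using Suc.prems(3) by (intro hh_mono[OF r0 b0 bSk]) (simp add: m0_def)
  moreover have "hh r \<beta> (Suc k) m0 \<le> hit (step p n) (\<lambda>d. amin n d = 0) (Suc k) c"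
  proof (cases "amin n c = 0")
    case True
    then show ?thesis using hh_le1[OF r0 b0 r1(2)] by simp
  next
    case False
    then have "m0 \<noteq> 0" using amin_zero[of n c j] by (auto simp: m0_def)
    then obtain m1 where m1: "m0 = Suc m1" by (cases m0) auto
    have "(1 - real K / (real n - 1)) * hh r \<beta> k (Suc m1) + real B * p / (real n * (real n - 1)) * (hh r \<beta> k m1 - hh r \<beta> k (Suc m1))
          \<le> measure_pmf.expectation (step p n c) (hit (step p n) (\<lambda>d. amin n d = 0) k)"
    proof (rule step_bound[OF n2 p0 p1 Suc.prems(2)])
      show "card (Sp n c j) = Suc m1" using m1 by (simp add: m0_def)
      show "Suc m1 \<le> K" using m1 Suc.prems(3,4) by (simp add: m0_def)
      show "B + Suc k \<le> card (Sp n c (nxt j))" using Suc.prems(5) .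
      show "hh r \<beta> k (Suc m1) \<le> hh r \<beta> k m1" by (rule hh_mono_Suc[OF r0 b0 bk'])
      show "0 \<le> hh r \<beta> k (Suc m1)" by (rule hh_nonneg[OF r0 b0])
      fix c' m' assume a: "noX n c'" "card (Sp n c' j) \<le> m'" "m' \<le> K" "B + k \<le> card (Sp n c' (nxt j))"
      have kk: "k \<le> kmax" using Suc.prems(1) by simp
      show "hh r \<beta> k m' \<le> hit (step p n) (\<lambda>d. amin n d = 0) k c'"
        by (rule Suc.IH[OF kk a(1) a(2) a(3) a(4)])
    qed
    moreover have "(1 - real K / (real n - 1)) * hh r \<beta> k (Suc m1) + real B * p / (real n * (real n - 1)) * (hh r \<beta> k m1 - hh r \<beta> k (Suc m1))
       = r * hh r \<beta> k (Suc m1) + \<beta> * hh r \<beta> k m1"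
      unfolding rdef beta by (simp add: algebra_simps)
    moreover have "hh r \<beta> (Suc k) (Suc m1) \<le> r * hh r \<beta> k (Suc m1) + \<beta> * hh r \<beta> k m1"
      by (rule hh_rec[OF r0 r1(1) b0])
    ultimately have "hh r \<beta> (Suc k) (Suc m1) \<le> measure_pmf.expectation (step p n c) (hit (step p n) (\<lambda>d. amin n d = 0) k)"
      by linarith
    then show ?thesis using False m1 by simp
  qed
  ultimately show ?case by linarith
qed


lemma afrac_Sp: "afrac n c i = real (card (Sp n c i)) / real n"
  by (simp add: afrac_def Sp_def)

lemma card_Sp_sum:
  assumes nx: "noX n c"
  shows "card (Sp n c I1) + card (Sp n c I2) + card (Sp n c I3) = n"
proof -
  have part: "{..<n} = Sp n c I1 \<union> Sp n c I2 \<union> Sp n c I3"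
  proof
    show "{..<n} \<subseteq> Sp n c I1 \<union> Sp n c I2 \<union> Sp n c I3"
    proof
      fix k assume k: "k \<in> {..<n}"
      then have "c k \<noteq> SX" using nx by (auto simp: noX_def)
      then obtain i where "species (c k) = Some i" by (cases "c k") auto
      then show "k \<in> Sp n c I1 \<union> Sp n c I2 \<union> Sp n c I3" using k by (cases i) (auto simp: Sp_def)
    qed
  qed (auto simp: Sp_def)
  have "card (Sp n c I1 \<union> Sp n c I2 \<union> Sp n c I3) = card (Sp n c I1 \<union> Sp n c I2) + card (Sp n c I3)"
    by (rule card_Un_disjoint) (auto simp: Sp_def)
  also have "card (Sp n c I1 \<union> Sp n c I2) = card (Sp n c I1) + card (Sp n c I2)"
    by (rule card_Un_disjoint) (auto simp: Sp_def)
  finally have "card (Sp n c I1 \<union> Sp n c I2 \<union> Sp n c I3) = card (Sp n c I1) + card (Sp n c I2) + card (Sp n c I3)" .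
  moreover have "card {..<n} = n" by simp
  ultimately show ?thesis using part by metis
qed

lemma card_Sp_sum_j:
  assumes nx: "noX n c"
  shows "card (Sp n c j) + card (Sp n c (nxt j)) + card (Sp n c (nxt (nxt j))) = n"
  using card_Sp_sum[OF nx] by (cases j) auto

theorem lemma10:
  shows "\<exists>p0>0. \<forall>p::real. 0 < p \<and> p < p0 \<longrightarrow>
           (\<exists>\<gamma>>0. \<exists>C::nat. \<exists>n0::nat. \<forall>n\<ge>n0. \<forall>(c::cfg) (j::idx).
              xfrac n c = 0 \<and>
              afrac n c j \<le> c6 n c / real n \<and>
              afrac n c (nxt j) > sfrac n c / 40 \<longrightarrow>
              hit (step p n) (\<lambda>d. amin n d = 0) (C * n) c \<ge> \<gamma>)"
proof (rule exI[of _ "1/4::real"], rule conjI)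
  show "0 < (1/4::real)" by simp
  show "\<forall>p::real. 0 < p \<and> p < 1/4 \<longrightarrow>
           (\<exists>\<gamma>>0. \<exists>C::nat. \<exists>n0::nat. \<forall>n\<ge>n0. \<forall>(c::cfg) (j::idx).
              xfrac n c = 0 \<and>
              afrac n c j \<le> c6 n c / real n \<and>
              afrac n c (nxt j) > sfrac n c / 40 \<longrightarrow>
              hit (step p n) (\<lambda>d. amin n d = 0) (C * n) c \<ge> \<gamma>)"
  proof (intro allI impI)
    fix p :: real assume pp: "0 < p \<and> p < 1/4"
    define K :: nat where "K = 313600"
    define \<gamma> where "\<gamma> = exp (- (real K + 1) / 20) * (p / (25600 * real K)) ^ K"
    have K0: "0 < K" by (simp add: K_def)
    have g0: "0 < \<gamma>" unfolding \<gamma>_def using pp K0 by simp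
    have main: "\<gamma> \<le> hit (step p n) (\<lambda>d. amin n d = 0) (1 * n) c"
      if n: "80 * K + 160 \<le> n" and H: "xfrac n c = 0 \<and> afrac n c j \<le> c6 n c / real n \<and>
              afrac n c (nxt j) > sfrac n c / 40" for n c j
    proof -
      have n2: "2 \<le> n" using n by simp
      have npos: "0 < real n" using n2 by simp
      have nx: "noX n c"
      proof -
        have "real (card {k. k < n \<and> c k = SX}) = 0" using H npos by (simp add: xfrac_def)
        then have "card {k. k < n \<and> c k = SX} = 0" by simp
        then have "{k. k < n \<and> c k = SX} = {}" by (subst (asm) card_eq_0_iff) auto
        then show ?thesis by (auto simp: noX_def)
      qed
      have s1: "sfrac n c = 1"
        using card_Sp_sum[OF nx] npos unfolding sfrac_def afrac_Sp
        by (simp add: add_divide_distrib[symmetric] of_nat_add[symmetric] del: of_nat_add)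
      have cj: "card (Sp n c j) \<le> K"
      proof -
        have "real (card (Sp n c j)) / real n \<le> 313600 / real n"
          using H s1 by (simp add: afrac_Sp c6_def)
        then have "real (card (Sp n c j)) \<le> 313600" using npos by (simp add: divide_le_cancel)
        then show ?thesis unfolding K_def by simp
      qed
      define k0 where "k0 = n div 80"
      have k0a: "n \<le> 80 * k0 + 79" unfolding k0_def by linarith
      have k0b: "80 * k0 \<le> n" unfolding k0_def by linarith
      have k0K: "K \<le> k0" using n k0a by linarith
      have k0n: "k0 \<le> n" using k0b by linarith
      have rk0a: "real n / 160 \<le> real k0" using k0a n by linarith
      have rk0b: "80 * real k0 \<le> real n" using k0b by linarith
      have cnj: "k0 + k0 \<le> card (Sp n c (nxt j))"
      proof -
        have "1/40 < real (card (Sp n c (nxt j))) / real n" using H s1 by (simp add: afrac_Sp)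
        then have "real n / 40 < real (card (Sp n c (nxt j)))" using npos by (simp add: field_simps)
        then show ?thesis using rk0b by linarith
      qed
      define \<beta> where "\<beta> = real k0 * p / (real n * (real n - 1))"
      define x where "x = real K / (real n - 1) + \<beta>"
      define r where "r = 1 - real K / (real n - 1) - \<beta>"
      have nm1: "0 < real n - 1" using n2 by simp
      have nn1: "0 < real n * (real n - 1)" using n2 by simp
      have b0: "0 \<le> \<beta>" unfolding \<beta>_def using pp nn1 by simp
      have ble: "\<beta> \<le> 1 / (real n - 1)"
      proof -
        have "real k0 * p \<le> real n * 1" using rk0b pp by (intro mult_mono) auto
        then have "\<beta> \<le> real n / (real n * (real n - 1))" unfolding \<beta>_def using nn1 by (intro divide_right_mono) auto
        also have "\<dots> = 1 / (real n - 1)" using npos by simp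
        finally show ?thesis .
      qed
      have xle: "x \<le> (real K + 1) / (real n - 1)" unfolding x_def using ble by (simp add: add_divide_distrib)
      have "(real K + 1) / (real n - 1) \<le> 1/2" using n nm1 by (simp add: field_simps)
      then have x2: "x \<le> 1/2" using xle by linarith
      have x0: "0 \<le> x" unfolding x_def using b0 nm1 by simp
      have rx: "r = 1 - x" unfolding r_def x_def by simp
      have r0: "0 \<le> r" using rx x2 by simp
      have bk: "\<beta> * real k0 \<le> 1"
      proof -
        have "real k0 * p \<le> real k0 * 1" using pp by (intro mult_left_mono) auto
        then have q1: "real k0 * p * real k0 \<le> real k0 * real k0" by (intro mult_right_mono) auto
        have "(80 * real k0) * (80 * real k0) \<le> real n * real n" using rk0b by (intro mult_mono) auto
        then have q2: "6400 * (real k0 * real k0) \<le> real n * real n" by (simp add: algebra_simps)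
        have "real k0 * p * real k0 \<le> real n * real n / 6400" using q1 q2 by linarith
        moreover have "real n * real n / 6400 \<le> real n * (real n - 1)" using n2 by (simp add: field_simps)
        ultimately show ?thesis unfolding \<beta>_def using nn1 by (simp add: field_simps)
      qed
      have hh_le: "hh r \<beta> k0 K \<le> hit (step p n) (\<lambda>d. amin n d = 0) k0 c"
        by (rule main_ind[OF n2 _ _ \<beta>_def r_def r0 bk]) (use pp nx cj cnj in auto)
      also have "\<dots> \<le> hit (step p n) (\<lambda>d. amin n d = 0) (1 * n) c" using k0n by (intro hit_mono) simp
      finally have hit_ge: "hh r \<beta> k0 K \<le> hit (step p n) (\<lambda>d. amin n d = 0) (1 * n) c" .
      have bk0: "p / 25600 \<le> \<beta> * real k0"
      proof -
        have "(real n / 160) * (real n / 160) \<le> real k0 * real k0" using rk0a npos by (intro mult_mono) auto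
        then have h1: "real n * real n / 25600 \<le> real k0 * real k0" by simp
        have nn: "0 < real n * real n" using npos by simp
        have "p / 25600 = p * (real n * real n / 25600) / (real n * real n)" using nn npos by simp
        also have "\<dots> \<le> p * (real k0 * real k0) / (real n * real n)"
          using h1 pp nn by (intro divide_right_mono mult_left_mono) auto
        also have "\<dots> \<le> p * (real k0 * real k0) / (real n * (real n - 1))"
          using pp nn1 npos by (intro divide_left_mono) auto
        also have "\<dots> = \<beta> * real k0" unfolding \<beta>_def by (simp add: field_simps)
        finally show ?thesis .
      qed
      have part1: "(p / (25600 * real K)) ^ K \<le> \<beta> ^ K * real (k0 choose K)"
      proof -
        have pk0: "0 \<le> p / (25600 * real K)" using pp by simp
        have "p / (25600 * real K) = (p / 25600) / real K" by simp
        also have "\<dots> \<le> (\<beta> * real k0) / real K" by (rule divide_right_mono[OF bk0]) simp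
        finally have "p / (25600 * real K) \<le> \<beta> * real k0 / real K" .
        then have "(p / (25600 * real K)) ^ K \<le> (\<beta> * real k0 / real K) ^ K"
          using pk0 by (rule power_mono)
        also have "\<dots> = \<beta> ^ K * (real k0 / real K) ^ K" by (simp add: power_mult_distrib power_divide)
        also have "\<dots> \<le> \<beta> ^ K * real (k0 choose K)"
          using b0 binomial_ge_n_over_k_pow_k[OF k0K] by (intro mult_left_mono) auto
        finally show ?thesis .
      qed
      have part2: "exp (- (real K + 1) / 20) \<le> r ^ k0"
      proof -
        have "- x - 2 * x\<^sup>2 \<le> ln (1 - x)" using x0 x2 by (rule ln_one_minus_pos_lower_bound)
        moreover have "x * x \<le> x * (1/2)" using x0 x2 by (intro mult_left_mono) auto
        then have "x\<^sup>2 \<le> x / 2" by (simp add: power2_eq_square)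
        ultimately have "-2 * x \<le> ln (1 - x)" by linarith
        then have "exp (-2 * x) \<le> exp (ln (1 - x))" by simp
        moreover have "exp (ln (1 - x)) = 1 - x" using x2 by (intro exp_ln) auto
        ultimately have e1: "exp (-2 * x) \<le> 1 - x" by simp
        have A: "- (real K + 1) / 20 \<le> real k0 * (-2 * x)"
        proof -
          have kn: "real k0 \<le> real n / 80" using rk0b by linarith
          have "real k0 * x \<le> (real n / 80) * ((real K + 1) / (real n - 1))"
            by (rule mult_mono[OF kn xle]) (use npos x0 in auto)
          also have "\<dots> \<le> (real K + 1) / 40"
          proof -
            have "real n \<le> 2 * (real n - 1)" using n2 by simp
            then have "real n * (real K + 1) \<le> 2 * (real n - 1) * (real K + 1)" by (intro mult_right_mono) auto
            then show ?thesis using nm1 by (simp add: field_simps)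
          qed
          finally show ?thesis by simp
        qed
        have "exp (- (real K + 1) / 20) \<le> exp (real k0 * (-2 * x))" using A by simp
        also have "\<dots> = exp (-2 * x) ^ k0" by (rule exp_of_nat_mult)
        also have "\<dots> \<le> (1 - x) ^ k0" by (rule power_mono[OF e1]) simp
        finally show ?thesis unfolding rx .
      qed
      have "\<gamma> \<le> r ^ k0 * (\<beta> ^ K * real (k0 choose K))"
        unfolding \<gamma>_def
      proof (rule mult_mono[OF part2 part1])
        show "0 \<le> r ^ k0" using r0 by (rule zero_le_power)
        show "0 \<le> (p / (25600 * real K)) ^ K" using pp by (intro zero_le_power) simp
      qed
      also have "\<dots> = hh r \<beta> k0 K" by (simp add: hh_def)
      finally show ?thesis using hit_ge by linarith
    qed
    show "\<exists>\<gamma>>0. \<exists>C::nat. \<exists>n0::nat. \<forall>n\<ge>n0. \<forall>(c::cfg) (j::idx).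
              xfrac n c = 0 \<and>
              afrac n c j \<le> c6 n c / real n \<and>
              afrac n c (nxt j) > sfrac n c / 40 \<longrightarrow>
              hit (step p n) (\<lambda>d. amin n d = 0) (C * n) c \<ge> \<gamma>"
      using g0 main by blast
  qed
qed

end
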